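(* Let $(a_n)_{n\in\mathbb{N}}$ be a C-finite sequence over $\mathbb{C}$. Let $c\in\mathbb{N}^{+}$ and $d,e\in\mathbb{Z}$. Then the sequence $b_n=a_{c\binom{n}{2}+dn+e}$ (defined for all $n$ large enough that the index is nonnegative) is C$^2$-finite over $\mathbb{C}$. In particular, $(a_{n^2})_n$ and $(a_{\binom{n}{2}})_n$ are C$^2$-finite.
   Context: Let $\mathbb{K}$ be a field. A sequence $(a_n)_{n\in\mathbb{N}}$ over $\mathbb{K}$ is C-finite if there exist $s\in\mathbb{N}$ and constants $c^{(0)},\dots,c^{(s-1)}\in\mathbb{K}$ such that $a_{n+s}=c^{(s-1)}a_{n+s-1}+\dots+c^{(0)}a_n$ for every $n\ge s$. A sequence $(a_n)$ over $\mathbb{K}$ is C$^2$-finite if there exist $s\in\mathbb{N}$ and C-finite sequences $(c^{(0)}_n),\dots,(c^{(s)}_n)$ over $\mathbb{K}$ with $c^{(s)}_n\neq 0$ for every $n$, such that $c^{(s)}_n a_{n+s}=c^{(s-1)}_n a_{n+s-1}+\dots+c^{(0)}_n a_n$ for every $n\ge s$. *)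

theory Defs
  imports Complex_Main
begin

text \<open>C-finite sequences, following the paper's definition literally
  (the recurrence is required for every n \<ge> s).\<close>
definition C_finite :: "(nat \<Rightarrow> 'a::field) \<Rightarrow> bool" where
  "C_finite a \<longleftrightarrow>
     (\<exists>(s::nat) (c::nat \<Rightarrow> 'a).
        \<forall>n\<ge>s. a (n + s) = (\<Sum>i<s. c i * a (n + i)))"

definition C2_finite :: "(nat \<Rightarrow> 'a::field) \<Rightarrow> bool" where
  "C2_finite a \<longleftrightarrow>
     (\<exists>(s::nat) (c::nat \<Rightarrow> nat \<Rightarrow> 'a).
        (\<forall>i\<le>s. C_finite (c i)) \<and> (\<forall>n. c s n \<noteq> 0) \<and>
        (\<forall>n\<ge>s. c s n * a (n + s) = (\<Sum>i<s. c i n * a (n + i))))"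

end

theory Submission
  imports Defs "HOL-Computational_Algebra.Computational_Algebra" "HOL-Computational_Algebra.Field_as_Ring"
begin


definition op :: "complex poly \<Rightarrow> (nat \<Rightarrow> complex) \<Rightarrow> nat \<Rightarrow> complex" where
  "op p a m = (\<Sum>j\<le>degree p. coeff p j * a (m + j))"

lemma op_eq_sum: assumes "degree p < N" shows "op p a m = (\<Sum>j<N. coeff p j * a (m + j))"
proof -
  have "(\<Sum>j<N. coeff p j * a (m + j)) = (\<Sum>j\<le>degree p. coeff p j * a (m + j))"
    by (rule sum.mono_neutral_right) (use assms in \<open>auto simp: coeff_eq_0\<close>)
  then show ?thesis by (simp add: op_def)
qed

lemma op_add: "op (p + q) a m = op p a m + op q a m"
proof -
  define N where "N = Suc (max (degree p) (degree q))"
  have "degree (p+q) < N" using degree_add_le_max[of p q] unfolding N_def by linarith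
  moreover have "degree p < N" "degree q < N" unfolding N_def by auto
  ultimately show ?thesis by (simp only: op_eq_sum coeff_add sum.distrib distrib_right)
qed

lemma op_smult: "op (smult c p) a m = c * op p a m"
proof -
  have "degree (smult c p) < Suc (degree p)" using degree_smult_le[of c p] by simp
  then have "op (smult c p) a m = (\<Sum>j<Suc (degree p). coeff (smult c p) j * a (m + j))"
    by (rule op_eq_sum)
  also have "\<dots> = c * (\<Sum>j<Suc (degree p). coeff p j * a (m + j))"
    by (simp only: coeff_smult sum_distrib_left mult.assoc)
  also have "\<dots> = c * op p a m" by (simp only: op_eq_sum[of p "Suc (degree p)"] lessI)
  finally show ?thesis .
qed

lemma op_pCons: "op (pCons c p) a m = c * a m + op p (\<lambda>k. a (k+1)) m"
proof -
  have d: "degree (pCons c p) < Suc (Suc (degree p))" by (simp add: degree_pCons_le le_imp_less_Suc)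
  have "op (pCons c p) a m = (\<Sum>j<Suc (Suc (degree p)). coeff (pCons c p) j * a (m + j))"
    by (rule op_eq_sum[OF d])
  also have "\<dots> = c * a m + (\<Sum>j<Suc (degree p). coeff p j * a (m + Suc j))"
    by (subst sum.lessThan_Suc_shift) simp
  also have "\<dots> = c * a m + op p (\<lambda>k. a (k+1)) m"
    by (simp add: op_eq_sum[of p "Suc (degree p)"])
  finally show ?thesis .
qed

lemma op_lin_fun: "op p (\<lambda>k. u * a k + v * b k) m = u * op p a m + v * op p b m"
  by (simp add: op_def sum_distrib_left sum.distrib algebra_simps)

lemma op_zero_fun: "op p (\<lambda>k. 0) m = 0" by (simp add: op_def)

lemma op_shift: "op p (\<lambda>k. a (k + t)) m = op p a (m + t)"
  by (simp add: op_def algebra_simps)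

lemma op_mult: "op (p * q) a m = op p (op q a) m"
proof (induction p arbitrary: a m)
  case 0 then show ?case by (simp add: op_def)
next
  case (pCons c p)
  have "op (pCons c p * q) a m = op (smult c q + pCons 0 (p * q)) a m" by simp
  also have "\<dots> = c * op q a m + op (p*q) (\<lambda>k. a (k+1)) m"
    by (simp add: op_add op_smult op_pCons)
  also have "\<dots> = c * op q a m + op p (op q (\<lambda>k. a (k+1))) m" by (simp add: pCons.IH)
  also have "op q (\<lambda>k. a (k+1)) = (\<lambda>k. op q a (k+1))" using op_shift[of q a 1] by (auto simp: fun_eq_iff)
  finally show ?case by (simp add: op_pCons)
qed

lemma op_one: "op 1 a m = a m" by (simp add: op_def)

lemma op_const_fun: "op p (\<lambda>k. u * a k) m = u * op p a m"
  using op_lin_fun[of p u a 0 a m] by simp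



definition Exp :: "(nat \<Rightarrow> complex) \<Rightarrow> bool" where
  "Exp f \<longleftrightarrow> (\<exists>L::(complex \<times> complex) list. \<forall>n. f n = (\<Sum>(b,r)\<leftarrow>L. b * r ^ n))"

lemma Exp_geom: "Exp (\<lambda>n. b * r ^ n)"
  unfolding Exp_def by (rule exI[of _ "[(b,r)]"]) simp

lemma Exp_const: "Exp (\<lambda>n. b)"
  using Exp_geom[of b 1] by simp

lemma Exp_add: assumes "Exp f" "Exp g" shows "Exp (\<lambda>n. f n + g n)"
proof -
  obtain L1 L2 where "\<forall>n. f n = (\<Sum>(b,r)\<leftarrow>L1. b * r ^ n)" "\<forall>n. g n = (\<Sum>(b,r)\<leftarrow>L2. b * r ^ n)"
    using assms unfolding Exp_def by blast
  then show ?thesis unfolding Exp_def by (intro exI[of _ "L1 @ L2"]) simp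
qed

lemma Exp_neg: assumes "Exp f" shows "Exp (\<lambda>n. - f n)"
proof -
  obtain L1 where L1: "\<forall>n. f n = (\<Sum>(b,r)\<leftarrow>L1. b * r ^ n)"
    using assms unfolding Exp_def by blast
  have "\<forall>n. - f n = (\<Sum>(b,r)\<leftarrow>map (\<lambda>(b,r). (-b,r)) L1. b * r ^ n)"
  proof
    fix n show "- f n = (\<Sum>(b,r)\<leftarrow>map (\<lambda>(b,r). (-b,r)) L1. b * r ^ n)"
      unfolding L1[rule_format] by (induction L1) auto
  qed
  then show ?thesis unfolding Exp_def by blast
qed

lemma Exp_diff: assumes "Exp f" "Exp g" shows "Exp (\<lambda>n. f n - g n)"
  using Exp_add[OF assms(1) Exp_neg[OF assms(2)]] by simp

lemma Exp_mult_geom: assumes "Exp f" shows "Exp (\<lambda>n. b * r ^ n * f n)"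
proof -
  obtain L1 where L1: "\<forall>n. f n = (\<Sum>(b,r)\<leftarrow>L1. b * r ^ n)"
    using assms unfolding Exp_def by blast
  have "\<forall>n. b * r ^ n * f n = (\<Sum>(c,s)\<leftarrow>map (\<lambda>(c,s). (b*c,r*s)) L1. c * s ^ n)"
  proof
    fix n show "b * r ^ n * f n = (\<Sum>(c,s)\<leftarrow>map (\<lambda>(c,s). (b*c,r*s)) L1. c * s ^ n)"
      unfolding L1[rule_format] by (induction L1) (auto simp: algebra_simps power_mult_distrib)
  qed
  then show ?thesis unfolding Exp_def by blast
qed

lemma Exp_mult: assumes "Exp f" "Exp g" shows "Exp (\<lambda>n. f n * g n)"
proof -
  obtain L1 where L1: "\<forall>n. f n = (\<Sum>(b,r)\<leftarrow>L1. b * r ^ n)"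
    using assms unfolding Exp_def by blast
  have "\<forall>n. f n * g n = (\<Sum>(b,r)\<leftarrow>L1. b * r ^ n * g n)"
    by (simp add: L1 sum_list_mult_const[symmetric] case_prod_unfold)
  moreover have "Exp (\<lambda>n. (\<Sum>(b,r)\<leftarrow>L1. b * r ^ n * g n))"
  proof (induction L1)
    case Nil then show ?case using Exp_const[of 0] by simp
  next
    case (Cons x L) then show ?case
      using Exp_add[OF Exp_mult_geom[OF assms(2), of "fst x" "snd x"] Cons]
      by (simp add: case_prod_unfold)
  qed
  ultimately show ?thesis by (metis (no_types, lifting) ext)
qed

lemma Exp_shift: assumes "Exp f" shows "Exp (\<lambda>n. f (n + k))"
proof -
  obtain L1 where L1: "\<forall>n. f n = (\<Sum>(b,r)\<leftarrow>L1. b * r ^ n)"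
    using assms unfolding Exp_def by blast
  have "\<forall>n. f (n+k) = (\<Sum>(c,s)\<leftarrow>map (\<lambda>(c,s). (c*s^k,s)) L1. c * s ^ n)"
  proof
    fix n show "f (n+k) = (\<Sum>(c,s)\<leftarrow>map (\<lambda>(c,s). (c*s^k,s)) L1. c * s ^ n)"
      unfolding L1[rule_format] by (induction L1) (auto simp: algebra_simps power_add)
  qed
  then show ?thesis unfolding Exp_def by blast
qed

lemma Exp_sum: assumes "\<And>i. i \<in> A \<Longrightarrow> Exp (f i)" shows "Exp (\<lambda>n. \<Sum>i\<in>A. f i n)"
proof (cases "finite A")
  case True then show ?thesis using assms
  proof (induction A rule: finite_induct)
    case empty then show ?case using Exp_const[of 0] by simp
  next
    case (insert x F) then show ?case using Exp_add[of "f x" "\<lambda>n. \<Sum>i\<in>F. f i n"] by simp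
  qed
next
  case False then show ?thesis using Exp_const[of 0] by simp
qed

lemma Exp_if: assumes "P \<Longrightarrow> Exp f" shows "Exp (\<lambda>n. if P then f n else 0)"
  using assms Exp_const[of 0] by (cases P) auto

definition MC :: "(nat \<Rightarrow> complex) \<Rightarrow> bool" where
  "MC y \<longleftrightarrow> (\<exists>K \<gamma>. (\<forall>j<K. Exp (\<gamma> j)) \<and> (\<forall>n. y (n + K) = (\<Sum>j<K. \<gamma> j n * y (n + j))))"

lemma reindex1: fixes y :: "nat \<Rightarrow> complex" shows "(\<Sum>j<K. f j * y (n + m + j)) =
   (\<Sum>t<m+K. (if m \<le> t \<and> t < m + K then f (t - m) else 0) * y (n + t))"
proof -
  have "(\<Sum>t<m+K. (if m \<le> t \<and> t < m + K then f (t - m) else 0) * y (n + t))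
      = (\<Sum>t\<in>{m..<m+K}. (if m \<le> t \<and> t < m + K then f (t - m) else 0) * y (n + t))"
    by (rule sum.mono_neutral_right) auto
  also have "\<dots> = (\<Sum>t\<in>{m..<m+K}. f (t - m) * y (n + t))" by (rule sum.cong) auto
  also have "\<dots> = (\<Sum>j<K. f j * y (n + m + j))"
    by (rule sum.reindex_bij_witness[of _ "\<lambda>j. j + m" "\<lambda>t. t - m"]) (auto simp: algebra_simps)
  finally show ?thesis by simp
qed

lemma reindex2: fixes y :: "nat \<Rightarrow> complex" shows "(\<Sum>i<m. \<Sum>j<K. X i j * y (n + i + j)) =
   (\<Sum>t<m+K. (\<Sum>i<m. \<Sum>j<K. if i + j = t then X i j else 0) * y (n + t))"
proof -
  have "(\<Sum>t<m+K. (\<Sum>i<m. \<Sum>j<K. if i + j = t then X i j else 0) * y (n + t))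
     = (\<Sum>t<m+K. \<Sum>i<m. \<Sum>j<K. (if i + j = t then X i j * y (n + t) else 0))"
    by (auto simp: sum_distrib_right intro!: sum.cong)
  also have "\<dots> = (\<Sum>i<m. \<Sum>j<K. \<Sum>t<m+K. (if i + j = t then X i j * y (n + t) else 0))"
    by (subst sum.swap, rule sum.cong, simp, rule sum.swap)
  also have "\<dots> = (\<Sum>i<m. \<Sum>j<K. X i j * y (n + i + j))"
    by (rule sum.cong, simp, rule sum.cong, simp) (auto simp: sum.delta' algebra_simps)
  finally show ?thesis by simp
qed

lemma MC_comp:
  assumes g: "\<forall>j<K. Exp (\<gamma> j)" and z: "MC z"
      and zdef: "\<And>n. z n = y (n + K) - (\<Sum>j<K. \<gamma> j n * y (n + j))"
  shows "MC y"
proof -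
  obtain m \<delta> where d: "\<forall>i<m. Exp (\<delta> i)" and rz: "\<And>n. z (n + m) = (\<Sum>i<m. \<delta> i n * z (n + i))"
    using z unfolding MC_def by blast
  define \<epsilon> where "\<epsilon> t n = (if m \<le> t \<and> t < m + K then \<gamma> (t - m) (n + m) else 0)
     + (if K \<le> t \<and> t < K + m then \<delta> (t - K) n else 0)
     - (\<Sum>i<m. \<Sum>j<K. if i + j = t then \<delta> i n * \<gamma> j (n + i) else 0)" for t n
  have "Exp (\<epsilon> t)" for t
    unfolding \<epsilon>_def
    apply (intro Exp_diff Exp_add Exp_if Exp_sum Exp_mult Exp_shift)
    using g d by auto
  moreover have "y (n + (m + K)) = (\<Sum>t<m+K. \<epsilon> t n * y (n + t))" for n
  proof -
    have "y (n + m + K) = z (n + m) + (\<Sum>j<K. \<gamma> j (n + m) * y (n + m + j))"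
      using zdef[of "n+m"] by simp
    also have "z (n + m) = (\<Sum>i<m. \<delta> i n * (y (n + i + K) - (\<Sum>j<K. \<gamma> j (n + i) * y (n + i + j))))"
      using rz zdef by simp
    also have "\<dots> = (\<Sum>i<m. \<delta> i n * y (n + K + i)) - (\<Sum>i<m. \<Sum>j<K. (\<delta> i n * \<gamma> j (n + i)) * y (n + i + j))"
      by (simp add: algebra_simps sum_subtractf sum_distrib_left)
    finally have "y (n + m + K) = (\<Sum>i<m. \<delta> i n * y (n + K + i)) - (\<Sum>i<m. \<Sum>j<K. (\<delta> i n * \<gamma> j (n + i)) * y (n + i + j))
       + (\<Sum>j<K. \<gamma> j (n + m) * y (n + m + j))" .
    also have "\<dots> = (\<Sum>t<K+m. (if K \<le> t \<and> t < K + m then \<delta> (t - K) n else 0) * y (n + t))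
        - (\<Sum>t<m+K. (\<Sum>i<m. \<Sum>j<K. if i + j = t then \<delta> i n * \<gamma> j (n + i) else 0) * y (n + t))
        + (\<Sum>t<m+K. (if m \<le> t \<and> t < m + K then \<gamma> (t - m) (n + m) else 0) * y (n + t))"
      using reindex1[where f="\<lambda>i. \<delta> i n" and K=m and y=y and n=n and m=K]
        reindex2[where X="\<lambda>i j. \<delta> i n * \<gamma> j (n+i)" and m=m and K=K and y=y and n=n]
        reindex1[where f="\<lambda>j. \<gamma> j (n+m)" and K=K and y=y and n=n and m=m] by (simp only:)
    also have "\<dots> = (\<Sum>t<m+K. \<epsilon> t n * y (n + t))"
    proof -
      have km: "K + m = m + K" by simp
      show ?thesis unfolding \<epsilon>_def km
        by (simp only: sum.distrib sum_subtractf distrib_right left_diff_distrib) (simp add: algebra_simps)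
    qed
    finally show ?thesis by (simp add: add.assoc)
  qed
  ultimately show ?thesis unfolding MC_def by blast
qed



definition CF :: "(nat \<Rightarrow> complex) \<Rightarrow> bool" where
  "CF R \<longleftrightarrow> (\<exists>P. lead_coeff P = 1 \<and> (\<forall>m. op P R m = 0))"

lemma CF_add: assumes "CF R1" "CF R2" shows "CF (\<lambda>k. R1 k + R2 k)"
proof -
  obtain P1 P2 where p: "lead_coeff P1 = 1" "\<forall>m. op P1 R1 m = 0" "lead_coeff P2 = 1" "\<forall>m. op P2 R2 m = 0"
    using assms unfolding CF_def by blast
  have z1: "op P1 R1 = (\<lambda>k. 0)" and z2: "op P2 R2 = (\<lambda>k. 0)" using p by auto
  have "op (P1 * P2) (\<lambda>k. R1 k + R2 k) m = 0" for m
  proof -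
    have "op (P1 * P2) (\<lambda>k. 1 * R1 k + 1 * R2 k) m = op (P1*P2) R1 m + op (P1*P2) R2 m"
      using op_lin_fun[of "P1*P2" 1 R1 1 R2 m] by simp
    also have "op (P1*P2) R1 m = 0" by (simp add: mult.commute[of P1] op_mult z1 op_zero_fun)
    also have "op (P1*P2) R2 m = 0" by (simp add: op_mult z2 op_zero_fun)
    finally show ?thesis by simp
  qed
  moreover have "lead_coeff (P1 * P2) = 1" by (simp add: lead_coeff_mult p)
  ultimately show ?thesis unfolding CF_def by blast
qed

lemma CF_zero: "CF (\<lambda>k. 0)"
  unfolding CF_def by (intro exI[of _ 1]) (simp add: op_zero_fun)

lemma CF_smult: assumes "CF R" shows "CF (\<lambda>k. u * R k)"
  using assms unfolding CF_def by (auto simp: op_const_fun)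

lemma CF_shift: assumes "CF R" shows "CF (\<lambda>k. R (k + t))"
  using assms unfolding CF_def by (auto simp: op_shift)

lemma CF_sum: assumes "\<And>i. i \<in> A \<Longrightarrow> CF (f i)" shows "CF (\<lambda>n. \<Sum>i\<in>A. f i n)"
proof (cases "finite A")
  case True then show ?thesis using assms
  proof (induction A rule: finite_induct)
    case empty then show ?case using CF_zero by simp
  next
    case (insert x F) then show ?case using CF_add[of "f x" "\<lambda>n. \<Sum>i\<in>F. f i n"] by simp
  qed
next
  case False then show ?thesis using CF_zero by simp
qed

lemma CF_geom: assumes "CF R" shows "CF (\<lambda>k. r ^ k * R k)"
proof (cases "r = 0")
  case True
  have "op [:0,1:] (\<lambda>k. r ^ k * R k) m = 0" for m using True by (simp add: op_def)
  then show ?thesis unfolding CF_def by (intro exI[of _ "[:0,1:]"]) simp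
next
  case False
  obtain P where p: "lead_coeff P = 1" "\<forall>m. op P R m = 0" using assms unfolding CF_def by blast
  define K where "K = degree P"
  define P' where "P' = Poly (map (\<lambda>j. coeff P j * r ^ (K - j)) [0..<Suc K])"
  have cP': "coeff P' j = (if j \<le> K then coeff P j * r ^ (K - j) else 0)" for j
    unfolding P'_def by (auto simp: nth_default_def simp del: upt_Suc)
  have "coeff P' K = 1" using p by (simp add: cP' K_def)
  moreover have "degree P' \<le> K" by (rule degree_le) (auto simp: cP')
  ultimately have dP': "degree P' = K" by (metis le_degree one_neq_zero order_antisym)
  with \<open>coeff P' K = 1\<close> have "lead_coeff P' = 1" by simp
  moreover have "op P' (\<lambda>k. r ^ k * R k) m = 0" for m
  proof -
    have "op P' (\<lambda>k. r ^ k * R k) m = (\<Sum>j\<le>K. coeff P j * r ^ (K - j) * (r ^ (m + j) * R (m + j)))"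
      unfolding op_def dP' by (rule sum.cong) (auto simp: cP')
    also have "\<dots> = (\<Sum>j\<le>K. r ^ (m + K) * (coeff P j * R (m + j)))"
    proof (rule sum.cong)
      fix j assume "j \<in> {..K}"
      then have "r ^ (K - j) * r ^ (m + j) = r ^ (m + K)" by (simp add: power_add[symmetric] add.commute)
      then show "coeff P j * r ^ (K - j) * (r ^ (m + j) * R (m + j)) = r ^ (m + K) * (coeff P j * R (m + j))"
        by (metis (no_types, lifting) mult.assoc mult.left_commute)
    qed simp
    also have "\<dots> = r ^ (m + K) * op P R m" by (simp add: op_def K_def sum_distrib_left)
    finally show ?thesis using p by simp
  qed
  ultimately show ?thesis unfolding CF_def by blast
qed

lemma op_geom: "op p (\<lambda>n. r ^ n) m = r ^ m * poly p r"
  by (simp add: op_def poly_altdef sum_distrib_left power_add algebra_simps)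

lemma Exp_CF: assumes "Exp f" shows "CF f"
proof -
  obtain L where L: "\<forall>n. f n = (\<Sum>(b,r)\<leftarrow>L. b * r ^ n)" using assms unfolding Exp_def by blast
  have "CF (\<lambda>n. \<Sum>(b,r)\<leftarrow>L. b * r ^ n)"
  proof (induction L)
    case Nil then show ?case using CF_zero by simp
  next
    case (Cons x L)
    have "CF (\<lambda>n. snd x ^ n)" unfolding CF_def
      by (intro exI[of _ "[:- snd x, 1:]"]) (simp add: op_geom)
    then have "CF (\<lambda>n. fst x * snd x ^ n)" by (rule CF_smult)
    from CF_add[OF this Cons.IH] show ?case by (simp add: case_prod_unfold)
  qed
  moreover have "f = (\<lambda>n. \<Sum>(b,r)\<leftarrow>L. b * r ^ n)" using L by auto
  ultimately show ?thesis by simp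
qed

lemma CF_C_finite: assumes "CF a" shows "C_finite a"
proof -
  obtain P where p: "lead_coeff P = 1" "\<forall>m. op P a m = 0" using assms unfolding CF_def by blast
  define s where "s = degree P"
  have "a (n + s) = (\<Sum>i<s. - coeff P i * a (n + i))" for n
  proof -
    have "0 = op P a n" using p by simp
    also have "\<dots> = (\<Sum>i<s. coeff P i * a (n + i)) + a (n + s)"
      unfolding op_def s_def[symmetric] using p by (simp add: lessThan_Suc_atMost[symmetric] s_def)
    finally show ?thesis by (simp add: sum_negf eq_neg_iff_add_eq_0 add.commute)
  qed
  then show ?thesis unfolding C_finite_def by (intro exI[of _ s] exI[of _ "\<lambda>i. - coeff P i"]) auto
qed

lemma Exp_C_finite: "Exp f \<Longrightarrow> C_finite f" using Exp_CF CF_C_finite by blast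

lemma MC_C2: assumes "MC (\<lambda>n. y (n + N))" shows "C2_finite y"
proof -
  obtain K \<gamma> where g: "\<forall>j<K. Exp (\<gamma> j)" and r: "\<And>n. y (n + K + N) = (\<Sum>j<K. \<gamma> j n * y (n + j + N))"
    using assms unfolding MC_def by (auto simp: add.assoc)
  define c where "c i = (if i = N + K then (\<lambda>_. 1) else if N \<le> i \<and> i < N + K then \<gamma> (i - N) else (\<lambda>_. 0))" for i
  have "C_finite (c i)" for i
    unfolding c_def using g Exp_C_finite[OF Exp_const[of 1]] Exp_C_finite[OF Exp_const[of 0]]
    by (auto intro!: Exp_C_finite)
  moreover have "c (N+K) n \<noteq> 0" for n by (simp add: c_def)
  moreover have "c (N+K) n * y (n + (N+K)) = (\<Sum>i<N+K. c i n * y (n + i))" for n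
  proof -
    have "y (n + (N+K)) = (\<Sum>j<K. \<gamma> j n * y (n + N + j))" using r[of n] by (simp add: algebra_simps)
    also have "\<dots> = (\<Sum>t<N+K. (if N \<le> t \<and> t < N + K then \<gamma> (t - N) n else 0) * y (n + t))"
      by (rule reindex1)
    also have "\<dots> = (\<Sum>i<N+K. c i n * y (n + i))" by (rule sum.cong) (auto simp: c_def)
    finally show ?thesis by (simp add: c_def)
  qed
  ultimately show ?thesis unfolding C2_finite_def by blast
qed



lemma choose2_Suc: "Suc k choose 2 = (k choose 2) + k"
  by (simp add: numeral_2_eq_2)

lemma choose2_add: "(n + j) choose 2 = (n choose 2) + j * n + (j choose 2)"
  by (induction j) (simp_all add: choose2_Suc algebra_simps)

definition ex :: "nat \<Rightarrow> nat \<Rightarrow> nat \<Rightarrow> nat" where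
  "ex K j n = (K - j) * n + ((K choose 2) - (j choose 2))"

lemma ex_id: assumes "j \<le> K" shows "ex K j n + ((n + j) choose 2) = (n + K) choose 2"
proof -
  obtain t where t: "K = j + t" using assms le_Suc_ex by blast
  have "K choose 2 = (j choose 2) + t * j + (t choose 2)" using choose2_add[of j t] t by simp
  then show ?thesis unfolding ex_def using choose2_add[of n j] choose2_add[of n K] t
    by (simp add: algebra_simps)
qed

definition Lop :: "complex poly \<Rightarrow> complex \<Rightarrow> (nat \<Rightarrow> complex) \<Rightarrow> nat \<Rightarrow> complex" where
  "Lop P \<Lambda> y n = (\<Sum>j\<le>degree P. coeff P j * \<Lambda> ^ ex (degree P) j n * y (n + j))"

lemma Lop_recur:
  assumes "lead_coeff P = 1"
  shows "Lop P \<Lambda> y n = y (n + degree P) - (\<Sum>j<degree P. (- coeff P j * \<Lambda> ^ ex (degree P) j n) * y (n + j))"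
proof -
  have "ex (degree P) (degree P) n = 0" by (simp add: ex_def)
  then show ?thesis unfolding Lop_def using assms
    by (simp add: lessThan_Suc_atMost[symmetric] sum_negf)
qed

lemma Exp_ex: "Exp (\<lambda>n. c * \<Lambda> ^ ex K j n)"
proof -
  have "(\<lambda>n. c * \<Lambda> ^ ex K j n) = (\<lambda>n. (c * \<Lambda> ^ ((K choose 2) - (j choose 2))) * (\<Lambda> ^ (K - j)) ^ n)"
    by (auto simp: ex_def power_add power_mult)
  then show ?thesis using Exp_geom by simp
qed

lemma Lop_self:
  shows "Lop P \<Lambda> (\<lambda>n. \<Lambda> ^ (n choose 2) * R n) n = \<Lambda> ^ ((n + degree P) choose 2) * op P R n"
proof -
  have "Lop P \<Lambda> (\<lambda>n. \<Lambda> ^ (n choose 2) * R n) n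
      = (\<Sum>j\<le>degree P. \<Lambda> ^ ((n + degree P) choose 2) * (coeff P j * R (n + j)))"
    unfolding Lop_def
  proof (rule sum.cong)
    fix j assume "j \<in> {..degree P}"
    then have "\<Lambda> ^ ex (degree P) j n * \<Lambda> ^ ((n+j) choose 2) = \<Lambda> ^ ((n + degree P) choose 2)"
      using ex_id[of j "degree P" n] by (simp add: power_add[symmetric])
    then show "coeff P j * \<Lambda> ^ ex (degree P) j n * (\<Lambda> ^ ((n + j) choose 2) * R (n + j)) =
         \<Lambda> ^ ((n + degree P) choose 2) * (coeff P j * R (n + j))"
      by (metis (no_types, lifting) mult.assoc mult.left_commute)
  qed simp
  then show ?thesis by (simp add: op_def sum_distrib_left)
qed

definition Rpp :: "complex poly \<Rightarrow> complex \<Rightarrow> complex \<Rightarrow> (nat \<Rightarrow> complex) \<Rightarrow> nat \<Rightarrow> complex" where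
  "Rpp P \<Lambda> M R n = (\<Sum>j\<le>degree P. (coeff P j * \<Lambda> ^ ((degree P choose 2) - (j choose 2)) * M ^ (j choose 2))
       * ((\<Lambda> ^ (degree P - j) * M ^ j) ^ n * R (n + j)))"

lemma CF_Rpp: assumes "CF R" shows "CF (Rpp P \<Lambda> M R)"
  unfolding Rpp_def
  by (intro CF_sum CF_smult CF_geom CF_shift assms)

lemma Lop_other:
  shows "Lop P \<Lambda> (\<lambda>n. M ^ (n choose 2) * R n) n = M ^ (n choose 2) * Rpp P \<Lambda> M R n"
proof -
  have "Lop P \<Lambda> (\<lambda>n. M ^ (n choose 2) * R n) n
      = (\<Sum>j\<le>degree P. M ^ (n choose 2) * ((coeff P j * \<Lambda> ^ ((degree P choose 2) - (j choose 2)) * M ^ (j choose 2))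
       * ((\<Lambda> ^ (degree P - j) * M ^ j) ^ n * R (n + j))))"
    unfolding Lop_def
  proof (rule sum.cong)
    fix j
    have e1: "\<Lambda> ^ ex (degree P) j n = (\<Lambda> ^ (degree P - j)) ^ n * \<Lambda> ^ ((degree P choose 2) - (j choose 2))"
      by (simp add: ex_def power_add power_mult)
    have e2: "M ^ ((n + j) choose 2) = M ^ (n choose 2) * (M ^ j) ^ n * M ^ (j choose 2)"
      by (simp add: choose2_add power_add flip: power_mult)
    show "coeff P j * \<Lambda> ^ ex (degree P) j n * (M ^ ((n + j) choose 2) * R (n + j)) =
      M ^ (n choose 2) * ((coeff P j * \<Lambda> ^ ((degree P choose 2) - (j choose 2)) * M ^ (j choose 2))
       * ((\<Lambda> ^ (degree P - j) * M ^ j) ^ n * R (n + j)))"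
      unfolding e1 e2 by (simp add: power_mult_distrib algebra_simps)
  qed simp
  then show ?thesis by (simp add: Rpp_def sum_distrib_left)
qed

lemma Lop_add: "Lop P \<Lambda> (\<lambda>n. f n + g n) n = Lop P \<Lambda> f n + Lop P \<Lambda> g n"
  by (simp add: Lop_def algebra_simps sum.distrib)

lemma Lop_zero: "Lop P \<Lambda> (\<lambda>n. 0) n = 0"
  by (simp add: Lop_def)

lemma Lop_list: "Lop P \<Lambda> (\<lambda>n. \<Sum>x\<leftarrow>L. fst x ^ (n choose 2) * snd x n) n
   = (\<Sum>x\<leftarrow>map (\<lambda>x. (fst x, Rpp P \<Lambda> (fst x) (snd x))) L. fst x ^ (n choose 2) * snd x n)"
proof (induction L)
  case Nil then show ?case by (simp add: Lop_zero)
next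
  case (Cons x L)
  then show ?case
    using Lop_add[of P \<Lambda> "\<lambda>n. fst x ^ (n choose 2) * snd x n" "\<lambda>n. \<Sum>x\<leftarrow>L. fst x ^ (n choose 2) * snd x n" n]
    by (simp add: Lop_other)
qed

lemma MC_blocks_aux: "length L = k \<Longrightarrow> (\<forall>x\<in>set L. CF (snd x)) \<Longrightarrow> MC (\<lambda>n. \<Sum>x\<leftarrow>L. fst x ^ (n choose 2) * snd x n)"
proof (induction k arbitrary: L)
  case 0
  then show ?case unfolding MC_def by (intro exI[of _ 0]) simp
next
  case (Suc k)
  then obtain x L0 where L: "L = x # L0" and len: "length L0 = k" by (cases L) auto
  obtain \<Lambda> R where x: "x = (\<Lambda>, R)" by (cases x)
  from Suc.prems L x have "CF R" by simp
  then obtain P where p: "lead_coeff P = 1" "\<forall>m. op P R m = 0" unfolding CF_def by blast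
  define y where "y = (\<lambda>n. \<Sum>x\<leftarrow>L. fst x ^ (n choose 2) * snd x n)"
  define L' where "L' = map (\<lambda>x. (fst x, Rpp P \<Lambda> (fst x) (snd x))) L0"
  have "\<forall>x\<in>set L'. CF (snd x)" using Suc.prems L by (auto simp: L'_def intro!: CF_Rpp)
  moreover have "length L' = k" using len by (simp add: L'_def)
  ultimately have mz: "MC (\<lambda>n. \<Sum>x\<leftarrow>L'. fst x ^ (n choose 2) * snd x n)" using Suc.IH by blast
  have zdef: "(\<Sum>x\<leftarrow>L'. fst x ^ (n choose 2) * snd x n) = y (n + degree P) - (\<Sum>j<degree P. (- coeff P j * \<Lambda> ^ ex (degree P) j n) * y (n + j))" for n
  proof -
    have "y (n + degree P) - (\<Sum>j<degree P. (- coeff P j * \<Lambda> ^ ex (degree P) j n) * y (n + j)) = Lop P \<Lambda> y n"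
      using Lop_recur[OF p(1)] by simp
    also have "\<dots> = Lop P \<Lambda> (\<lambda>n. \<Lambda> ^ (n choose 2) * R n) n + Lop P \<Lambda> (\<lambda>n. \<Sum>x\<leftarrow>L0. fst x ^ (n choose 2) * snd x n) n"
      unfolding y_def L x using Lop_add[of P \<Lambda> "\<lambda>n. \<Lambda> ^ (n choose 2) * R n"] by simp
    also have "\<dots> = (\<Sum>x\<leftarrow>L'. fst x ^ (n choose 2) * snd x n)"
      by (simp add: Lop_self p(2) Lop_list L'_def)
    finally show ?thesis by simp
  qed
  have "MC y"
    by (rule MC_comp[OF _ mz zdef]) (use Exp_ex[of "- coeff P _"] in auto)
  then show ?case by (simp add: y_def)
qed

lemma MC_blocks: "(\<forall>x\<in>set L. CF (snd x)) \<Longrightarrow> MC (\<lambda>n. \<Sum>x\<leftarrow>L. fst x ^ (n choose 2) * snd x n)"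
  using MC_blocks_aux by blast



lemma op_diff1: "op [:-1,1:] f m = f (m+1) - f m"
  by (simp add: op_def)

lemma op_pow_Suc: "op ([:c,1:] ^ Suc k) f m = op ([:c,1:] ^ k) (op [:c,1:] f) m"
  by (subst power_Suc2) (rule op_mult)

lemma lemmaD: "degree Q \<le> k \<Longrightarrow> op ([:-1,1:] ^ Suc k) (\<lambda>n. poly Q (of_nat n)) m = 0"
proof (induction k arbitrary: Q m)
  case 0
  then obtain c where "Q = [:c:]" by (metis degree_eq_zeroE le_zero_eq)
  then show ?case by (simp add: op_def)
next
  case (Suc k)
  define D where "D = pcompose Q [:1,1:] - Q"
  have dD: "degree D \<le> k"
  proof -
    have d1: "degree (pcompose Q [:1,1:]) = degree Q" by (simp add: degree_pcompose)
    have le: "degree D \<le> degree Q" unfolding D_def using d1 by (intro degree_diff_le) auto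
    show ?thesis
    proof (cases "degree Q \<le> k")
      case True then show ?thesis using le by simp
    next
      case False
      then have dq: "degree Q = Suc k" using Suc.prems by simp
      have "coeff D (Suc k) = 0"
        using lead_coeff_comp[of "[:1,1:]" Q] d1 dq by (simp add: D_def)
      then have "degree D \<noteq> Suc k \<or> D = 0" by (metis leading_coeff_0_iff)
      then show ?thesis using le dq by (cases "D = 0") auto
    qed
  qed
  have "op [:-1,1:] (\<lambda>n. poly Q (of_nat n)) = (\<lambda>n. poly D (of_nat n))"
    by (auto simp: op_diff1 D_def poly_pcompose fun_eq_iff algebra_simps)
  then show ?case using Suc.IH[OF dD] by (simp only: op_pow_Suc)
qed

lemma op_vanish:
  assumes "lead_coeff P = 1" "\<And>m. op P g m = 0" "\<And>t. t < degree P \<Longrightarrow> g t = 0"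
  shows "g m = 0"
proof (induction m rule: less_induct)
  case (less m)
  show ?case
  proof (cases "m < degree P")
    case True then show ?thesis using assms(3) by simp
  next
    case False
    then obtain m' where m: "m = m' + degree P" by (metis add.commute le_Suc_ex not_less)
    have "0 = op P g m'" using assms(2) by simp
    also have "\<dots> = (\<Sum>j<degree P. coeff P j * g (m' + j)) + g m"
      unfolding op_def m using assms(1) by (simp add: lessThan_Suc_atMost[symmetric] add.commute)
    also have "(\<Sum>j<degree P. coeff P j * g (m' + j)) = 0"
      by (rule sum.neutral) (use less m in \<open>auto\<close>)
    finally show ?thesis by simp
  qed
qed

lemma newton:
  fixes f :: "nat \<Rightarrow> complex"
  assumes "\<And>m. op ([:-1,1:] ^ k) f m = 0"
  shows "\<exists>Q. \<forall>m. f m = poly Q (of_nat m)"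
proof (cases k)
  case 0
  then have "f m = 0" for m using assms[of m] by (simp add: op_one)
  then show ?thesis by (intro exI[of _ 0]) simp
next
  case (Suc k')
  define B where "B i = (\<Prod>j\<in>{..<k} - {i}. [:- of_nat j :: complex, 1:])" for i :: nat
  define Lag where "Lag = (\<Sum>i<k. smult (f i / poly (B i) (of_nat i)) (B i))"
  have pB: "poly (B i) x = (\<Prod>j\<in>{..<k} - {i}. x - of_nat j)" for i x
    by (simp add: B_def poly_prod)
  have Bz: "poly (B i) (of_nat t) = 0" if "t < k" "t \<noteq> i" for i t
    unfolding pB using that by (intro prod_zero) auto
  have Bnz: "poly (B i) (of_nat i) \<noteq> 0" for i
    unfolding pB by (auto simp: prod_zero_iff)
  have dB: "degree (B i) \<le> k'" if "i < k" for i
  proof -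
    have "degree (B i) \<le> sum (degree \<circ> (\<lambda>j. [:- of_nat j :: complex, 1:])) ({..<k} - {i})"
      unfolding B_def by (rule degree_prod_sum_le) simp
    also have "\<dots> = card ({..<k} - {i})" by simp
    also have "\<dots> = k'" using that Suc by simp
    finally show ?thesis .
  qed
  have dL: "degree Lag \<le> k'" unfolding Lag_def
    by (intro degree_sum_le) (auto intro: order.trans[OF degree_smult_le] dB)
  have evL: "poly Lag (of_nat t) = f t" if "t < k" for t
  proof -
    have "poly Lag (of_nat t) = (\<Sum>i<k. f i / poly (B i) (of_nat i) * poly (B i) (of_nat t))"
      by (simp add: Lag_def poly_sum)
    also have "\<dots> = (\<Sum>i\<in>{t}. f i / poly (B i) (of_nat i) * poly (B i) (of_nat t))"
      by (rule sum.mono_neutral_right) (use that Bz in auto)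
    also have "\<dots> = f t" using Bnz[of t] by simp
    finally show ?thesis .
  qed
  define g where "g m = f m - poly Lag (of_nat m)" for m
  have "op ([:-1,1:] ^ k) g m = 0" for m
  proof -
    have "op ([:-1,1:] ^ k) g m = 1 * op ([:-1,1:] ^ k) f m + (-1) * op ([:-1,1:] ^ k) (\<lambda>n. poly Lag (of_nat n)) m"
      unfolding g_def using op_lin_fun[of "[:-1,1:] ^ k" 1 f "-1" "\<lambda>n. poly Lag (of_nat n)" m] by simp
    also have "\<dots> = 0" using assms lemmaD[OF dL] Suc by simp
    finally show ?thesis .
  qed
  moreover have "lead_coeff ([:-1,1:] ^ k :: complex poly) = 1" by (simp add: lead_coeff_power)
  moreover have "degree ([:-1,1:] ^ k :: complex poly) = k" by (rule degree_linear_power)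
  ultimately have "g m = 0" for m using op_vanish[of "[:-1,1:] ^ k" g m] evL by (simp add: g_def)
  then show ?thesis by (intro exI[of _ Lag]) (auto simp: g_def)
qed

lemma op_scale_pow:
  assumes "l \<noteq> 0"
  shows "op ([:-l,1:] ^ k) (\<lambda>m. l ^ m * h m) m = l ^ (m + k) * op ([:-1,1:] ^ k) h m"
proof (induction k arbitrary: h m)
  case 0 then show ?case by (simp add: op_one)
next
  case (Suc k)
  have e: "op [:-l,1:] (\<lambda>m. l ^ m * h m) = (\<lambda>m. l * (l ^ m * op [:-1,1:] h m))"
  proof
    fix m
    have o1: "op [:c,1:] f m = f (Suc m) + c * f m" for c f m by (simp add: op_def)
    show "op [:-l,1:] (\<lambda>m. l ^ m * h m) m = l * (l ^ m * op [:-1,1:] h m)"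
      unfolding o1 by (simp add: right_diff_distrib mult.assoc)
  qed
  show ?case
    unfolding op_pow_Suc[of "-l"] op_pow_Suc[of "-1"] e
    using op_const_fun[of "[:-l,1:] ^ k" l "\<lambda>m. l ^ m * op [:-1,1:] h m" m] Suc.IH[of "op [:-1,1:] h" m]
    by simp
qed

definition CFC :: "(nat \<Rightarrow> complex) \<Rightarrow> bool" where
  "CFC a \<longleftrightarrow> (\<exists>M (L :: (complex \<times> complex poly) list). \<forall>m\<ge>M. a m = (\<Sum>x\<leftarrow>L. fst x ^ m * poly (snd x) (of_nat m)))"

lemma CFC_add: assumes "CFC a" "CFC b" shows "CFC (\<lambda>m. a m + b m)"
proof -
  obtain M1 L1 M2 L2 where "\<forall>m\<ge>M1. a m = (\<Sum>x\<leftarrow>L1. fst x ^ m * poly (snd x) (of_nat m))"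
    "\<forall>m\<ge>M2. b m = (\<Sum>x\<leftarrow>L2. fst x ^ m * poly (snd x) (of_nat m))"
    using assms unfolding CFC_def by blast
  then show ?thesis unfolding CFC_def by (intro exI[of _ "max M1 M2"] exI[of _ "L1 @ L2"]) auto
qed

lemma op_X: "op [:0,1:] a = (\<lambda>m. a (Suc m))" by (simp add: op_def fun_eq_iff)

lemma op_X_pow: "op ([:0,1:] ^ k) a m = a (m + k)"
proof (induction k arbitrary: a m)
  case 0 then show ?case by (simp add: op_one)
next
  case (Suc k) then show ?case by (simp only: op_pow_Suc[of 0] op_X) simp
qed

lemma CFC_block:
  assumes "\<And>m. op ([:-l,1:] ^ k) a m = 0"
  shows "CFC a"
proof (cases "l = 0")
  case True
  have "a (m + k) = 0" for m using assms[of m] op_X_pow[of k a m] True by simp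
  then have "\<forall>m\<ge>k. a m = (\<Sum>x\<leftarrow>[]. fst x ^ m * poly (snd x) (of_nat m))"
    by (auto dest!: le_Suc_ex simp: add.commute)
  then show ?thesis unfolding CFC_def by blast
next
  case False
  define h where "h m = a m / l ^ m" for m
  have ah: "a m = l ^ m * h m" for m using False by (simp add: h_def)
  have ah': "a = (\<lambda>m. l ^ m * h m)" using ah by auto
  have "op ([:-l,1:] ^ k) (\<lambda>m. l ^ m * h m) m = 0" for m using assms[of m] ah' by simp
  then have "op ([:-1,1:] ^ k) h m = 0" for m
    using op_scale_pow[OF False, of k h m] False by simp
  then obtain Q where Q: "\<forall>m. h m = poly Q (of_nat m)" using newton by blast
  have "\<forall>m\<ge>0. a m = (\<Sum>x\<leftarrow>[(l,Q)]. fst x ^ m * poly (snd x) (of_nat m))"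
    using Q ah by simp
  then show ?thesis unfolding CFC_def by blast
qed



lemma decomp: "P \<noteq> 0 \<Longrightarrow> (\<And>m. op P a m = 0) \<Longrightarrow> CFC a"
proof (induction "degree P" arbitrary: P a rule: less_induct)
  case less
  show ?case
  proof (cases "degree P = 0")
    case True
    then obtain c where P: "P = [:c:]" by (metis degree_eq_zeroE)
    with less.prems have "c \<noteq> 0" by simp
    have "a m = 0" for m using less.prems(2)[of m] P \<open>c \<noteq> 0\<close> by (simp add: op_def)
    then have "\<forall>m\<ge>0. a m = (\<Sum>x\<leftarrow>[]. fst x ^ m * poly (snd x) (of_nat m))" by simp
    then show ?thesis unfolding CFC_def by blast
  next
    case False
    have "\<not> (\<exists>c l. c \<noteq> 0 \<and> l = 0 \<and> P = pCons c l)" using False by auto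
    then obtain l where "poly P l = 0" using fundamental_theorem_of_algebra_alt by blast
    define k where "k = order l P"
    have k0: "k \<noteq> 0" using \<open>poly P l = 0\<close> less.prems(1) order_root k_def by blast
    obtain q where Pq: "P = [:-l,1:] ^ k * q" and nd: "\<not> [:-l,1:] dvd q"
      using order_decomp[OF less.prems(1), of l] k_def by blast
    have q0: "q \<noteq> 0" using Pq less.prems(1) by auto
    have "degree P = k + degree q" using Pq q0 by (simp add: degree_mult_eq degree_linear_power)
    then have dq: "degree q < degree P" using k0 by simp
    have "prime_elem [:-l,1:]" by (rule prime_elem_linear_field_poly) simp
    then have "coprime [:-l,1:] q" using nd by (meson dvd_trans not_coprimeE prime_elemD2)
    then have "coprime ([:-l,1:] ^ k) q" by simp
    then have g1: "gcd ([:-l,1:] ^ k) q = 1" by (simp add: coprime_iff_gcd_eq_1)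
    define X where "X = [:-l,1:] ^ k"
    define u where "u = fst (bezout_coefficients X q)"
    define v where "v = snd (bezout_coefficients X q)"
    have b: "u * X + v * q = 1" using bezout_coefficients_fst_snd[of X q] g1 by (simp add: u_def v_def X_def)
    have z: "op P a = (\<lambda>m. 0)" using less.prems(2) by auto
    define a1 where "a1 = op (v * q) a"
    define a2 where "a2 = op (u * X) a"
    have "op X a1 m = 0" for m
    proof -
      have "op X a1 m = op (v * P) a m" unfolding a1_def op_mult[symmetric] Pq X_def
        by (simp add: algebra_simps)
      also have "\<dots> = 0" by (simp add: op_mult z op_zero_fun)
      finally show ?thesis .
    qed
    then have c1: "CFC a1" unfolding X_def by (rule CFC_block)
    have "op q a2 m = 0" for m
    proof -
      have "op q a2 m = op (u * P) a m" unfolding a2_def op_mult[symmetric] Pq X_def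
        by (simp add: algebra_simps)
      also have "\<dots> = 0" by (simp add: op_mult z op_zero_fun)
      finally show ?thesis .
    qed
    then have c2: "CFC a2" using less.hyps[OF dq q0] by blast
    have "a m = a1 m + a2 m" for m
    proof -
      have "a m = op (u * X + v * q) a m" using b by (simp add: op_one)
      then show ?thesis by (simp add: op_add a1_def a2_def)
    qed
    then have "a = (\<lambda>m. a1 m + a2 m)" by auto
    then show ?thesis using CFC_add[OF c1 c2] by simp
  qed
qed



lemma CF_poly: "CF (\<lambda>n. poly Q (of_nat n))"
proof -
  have "lead_coeff ([:-1,1:] ^ Suc (degree Q) :: complex poly) = 1"
    by (simp only: lead_coeff_power) simp
  moreover have "\<forall>m. op ([:-1,1:] ^ Suc (degree Q)) (\<lambda>n. poly Q (of_nat n)) m = 0"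
    using lemmaD[of Q "degree Q"] by simp
  ultimately show ?thesis unfolding CF_def by blast
qed

lemma choose2_complex: "(of_nat (n choose 2) :: complex) = of_nat n * (of_nat n - 1) / 2"
  by (induction n) (simp_all add: choose2_Suc field_simps)

lemma C_finite_CFC:
  assumes "C_finite a"
  shows "\<exists>s. CFC (\<lambda>m. a (m + s))"
proof -
  obtain s cc where r: "\<forall>n\<ge>s. a (n + s) = (\<Sum>i<s. cc i * a (n + i))"
    using assms unfolding C_finite_def by blast
  define a0 where "a0 m = a (m + s)" for m
  define P where "P = monom (1::complex) s - (\<Sum>i<s. monom (cc i) i)"
  have cP: "coeff P j = (if s = j then 1 else 0) - (if j < s then cc j else 0)" for j
  proof -
    have "(\<Sum>i<s. coeff (monom (cc i) i) j) = (\<Sum>i<s. if i = j then cc i else 0)"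
      by (rule sum.cong) auto
    also have "\<dots> = (if j < s then cc j else 0)" by (simp add: sum.delta)
    finally show ?thesis by (simp add: P_def coeff_sum coeff_monom)
  qed
  have dP: "degree P < Suc s"
  proof -
    have "degree P \<le> s" unfolding P_def
      by (intro degree_diff_le degree_sum_le) (auto intro: order.trans[OF degree_monom_le])
    then show ?thesis by simp
  qed
  have P0: "P \<noteq> 0" using cP[of s] by auto
  have "op P a0 m = 0" for m
  proof -
    have "op P a0 m = (\<Sum>j<Suc s. coeff P j * a0 (m + j))" by (rule op_eq_sum[OF dP])
    also have "\<dots> = (\<Sum>j<s. - cc j * a0 (m + j)) + a0 (m + s)" by (simp add: cP)
    also have "a0 (m + s) = (\<Sum>i<s. cc i * a0 (m + i))"
      unfolding a0_def using r[rule_format, of "m + s"] by (simp add: algebra_simps)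
    finally show ?thesis by (simp add: sum_negf)
  qed
  then have "CFC a0" using decomp[OF P0] by blast
  then show ?thesis unfolding a0_def by blast
qed



lemma two_choose2: "2 * (n choose 2) = n * (n - 1)"
proof (induction n)
  case (Suc n)
  then show ?case by (cases n) (simp_all add: choose2_Suc algebra_simps)
qed simp

lemma index_shift:
  fixes d e :: int and c :: nat
  assumes "c > 0"
  shows "\<exists>N d' e'. e' \<ge> T \<and> (\<forall>n. int c * int ((n + N) choose 2) + d * int (n + N) + e = int (c * (n choose 2) + d' * n + e'))"
proof -
  define K where "K = nat \<bar>d\<bar> + nat \<bar>e\<bar> + T"
  define N where "N = 2 * K + 2"
  have cN: "N choose 2 = (K + 1) * (2 * K + 1)"
    using two_choose2[of N] unfolding N_def by simp
  define D where "D = int c * int N + d"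
  define E where "E = int c * int (N choose 2) + d * int N + e"
  have D0: "D \<ge> 0" unfolding D_def N_def K_def using assms
  proof -
    have "int c * int (2 * (nat \<bar>d\<bar> + nat \<bar>e\<bar> + T) + 2) \<ge> 1 * int (2 * (nat \<bar>d\<bar> + nat \<bar>e\<bar> + T) + 2)"
      using assms by (intro mult_right_mono) auto
    then show "int c * int (2 * (nat \<bar>d\<bar> + nat \<bar>e\<bar> + T) + 2) + d \<ge> 0" by simp
  qed
  have ET: "E \<ge> int T"
  proof -
    have "int c * int (N choose 2) \<ge> int (N choose 2)"
      using assms by (simp add: mult_le_cancel_right1)
    moreover have "int (N choose 2) = (int K + 1) * (2 * int K + 1)" using cN by (simp add: algebra_simps)
    moreover have "d * int N \<ge> - (int K * (2 * int K + 2))"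
    proof -
      have "\<bar>d\<bar> \<le> int K" unfolding K_def by linarith
      then have "\<bar>d\<bar> * int N \<le> int K * int N" by (intro mult_right_mono) auto
      moreover have "- (\<bar>d\<bar> * int N) \<le> d * int N" by (simp add: abs_if)
      ultimately have "- (int K * int N) \<le> d * int N" by linarith
      then show ?thesis unfolding N_def by (simp add: algebra_simps)
    qed
    moreover have "e \<ge> - int K + int T" unfolding K_def by linarith
    ultimately show ?thesis unfolding E_def by (simp add: algebra_simps)
  qed
  have "\<forall>n. int c * int ((n + N) choose 2) + d * int (n + N) + e = int (c * (n choose 2) + nat D * n + nat E)"
  proof
    fix n
    have "int ((n + N) choose 2) = int (n choose 2) + int N * int n + int (N choose 2)"
      by (simp add: choose2_add)
    then show "int c * int ((n + N) choose 2) + d * int (n + N) + e = int (c * (n choose 2) + nat D * n + nat E)"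
      using D0 ET by (simp add: D_def E_def algebra_simps)
  qed
  moreover have "nat E \<ge> T" using ET by simp
  ultimately show ?thesis by blast
qed



theorem theorem1:
  fixes a :: "nat \<Rightarrow> complex" and c :: nat and d e :: int
  assumes "C_finite a" and "c > 0"
  shows "\<exists>b :: nat \<Rightarrow> complex. C2_finite b \<and>
           (\<forall>n. int c * int (n choose 2) + d * int n + e \<ge> 0 \<longrightarrow>
                b n = a (nat (int c * int (n choose 2) + d * int n + e)))"
proof -
  obtain s where "CFC (\<lambda>m. a (m + s))" using C_finite_CFC[OF assms(1)] by blast
  then obtain M L where hML: "\<forall>m\<ge>M. a (m + s) = (\<Sum>x\<leftarrow>L. fst x ^ m * poly (snd x) (of_nat m))"
    unfolding CFC_def by blast
  obtain N d' e' where e': "e' \<ge> M + s" and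
    G: "\<And>n. int c * int ((n + N) choose 2) + d * int (n + N) + e = int (c * (n choose 2) + d' * n + e')"
    using index_shift[OF assms(2), of "M + s" d e] by blast
  define b where "b n = a (nat (int c * int (n choose 2) + d * int n + e))" for n
  define e0 where "e0 = e' - s"
  define Gp where "Gp = [:of_nat e0, of_nat d' - of_nat c / 2, of_nat c / 2 :: complex:]"
  define R where "R x n = fst x ^ e0 * ((fst x ^ d') ^ n * poly (pcompose (snd x) Gp) (of_nat n))"
    for x :: "complex \<times> complex poly" and n
  have pG: "poly Gp (of_nat n) = of_nat (c * (n choose 2) + d' * n + e0)" for n
    by (simp add: Gp_def choose2_complex field_simps)
  have tm: "fst x ^ (c * (n choose 2) + d' * n + e0) * poly (snd x) (of_nat (c * (n choose 2) + d' * n + e0))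
      = (fst x ^ c) ^ (n choose 2) * R x n" for x n
    by (simp add: R_def poly_pcompose pG power_add power_mult mult.commute mult.left_commute)
  have bN: "b (n + N) = (\<Sum>x\<leftarrow>map (\<lambda>x. (fst x ^ c, R x)) L. fst x ^ (n choose 2) * snd x n)" for n
  proof -
    have "b (n + N) = a (nat (int (c * (n choose 2) + d' * n + e')))"
      unfolding b_def by (simp only: G)
    also have "\<dots> = a ((c * (n choose 2) + d' * n + e0) + s)"
      using e' by (simp only: nat_int e0_def) (simp add: algebra_simps)
    also have "\<dots> = (\<Sum>x\<leftarrow>L. fst x ^ (c * (n choose 2) + d' * n + e0) * poly (snd x) (of_nat (c * (n choose 2) + d' * n + e0)))"
      by (rule hML[rule_format]) (use e' in \<open>simp add: e0_def\<close>)
    also have "\<dots> = (\<Sum>x\<leftarrow>L. (fst x ^ c) ^ (n choose 2) * R x n)" by (simp only: tm)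
    finally show ?thesis by (simp add: o_def)
  qed
  have "CF (R x)" for x unfolding R_def by (intro CF_smult CF_geom CF_poly)
  then have "\<forall>x\<in>set (map (\<lambda>x. (fst x ^ c, R x)) L). CF (snd x)" by auto
  then have "MC (\<lambda>n. \<Sum>x\<leftarrow>map (\<lambda>x. (fst x ^ c, R x)) L. fst x ^ (n choose 2) * snd x n)"
    by (rule MC_blocks)
  then have "MC (\<lambda>n. b (n + N))" by (simp only: bN)
  then have "C2_finite b" by (rule MC_C2)
  then show ?thesis unfolding b_def by blast
qed

end
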